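(* Let $\rho:\mathbb{N}\times\mathbb{N}\to\mathbb{N}$ be a bijection that is monotonic in the sense that $\rho(a,b)\le\rho(c,d)$ whenever $a\le c$ and $b\le d$. Define the infinite matrix $\mathbf{A}=[a(n,k)]_{n,k\ge 0}$ and infinite vectors $\mathbf{x}=[x(k)]_{k\ge0}$, $\mathbf{b}=[b(n)]_{n\ge 0}$ by $a(n,k)=c(u,v,i,j)$, $x(k)=f(i,j)$, and $b(n)=1$ if $u=v=1$, $b(n)=0$ otherwise, where $(u,v)=\rho^{-1}(n)$ and $(i,j)=\rho^{-1}(k)$. Then (i) $\mathbf{A}$ is lower-triangular with all diagonal entries equal to $1$; (ii) $\mathbf{A}\mathbf{x}=\mathbf{b}$ (each row sum $\sum_k a(n,k)x(k)$ having only finitely many nonzero terms).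
   Context: $F(m;\,n_1,n_2)$ denotes the number of lattice walks from $(0,0)$ to $(n_1,n_2)$ that always stay in the first quadrant $\{(a,b): a\ge 0,\ b\ge 0\}$ and have exactly $m$ steps, each belonging to $\{(1,0),(-1,0),(1,1),(-1,-1)\}$; by convention $F(m;\,n_1,n_2)=0$ if $m<0$, $n_1<0$ or $n_2<0$. Define $\widetilde F(m;\,n_1,0)=F(m-1;\,n_1,0)$ and $\widetilde F(m;\,0,n_2)=F(m-1;\,0,n_2)+F(m-1;\,0,n_2-1)$ for $m,n_1,n_2\ge 0$ (these agree at $n_1=n_2=0$). Define for $i,j\ge 0$: $f(i,j)=\widetilde F(i;\,0,j-i)$ if $i\le j$, and $f(i,j)=\widetilde F(j;\,i-j,0)$ if $i\ge j$. For $u,v,i,j\ge0$ define $c(u,v,i,j)=\binom{-\min\{i,j\}}{\frac{u-i}{2}}\binom{-\min\{i,j\}}{v-j-\frac{u-i}{2}}$ if $i\equiv u\pmod 2$ and $c(u,v,i,j)=0$ otherwise, where for integers $a,k$, $\binom{a}{k}=\frac{a(a-1)\cdots(a-k+1)}{k!}$ if $k\ge0$ and $\binom{a}{k}=0$ if $k<0$. *)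

theory Defs
  imports Main
begin

definition steps :: "(int \<times> int) set" where
  "steps = {(1,0), (-1,0), (1,1), (-1,-1)}"

definition qwalks :: "nat \<Rightarrow> int \<Rightarrow> int \<Rightarrow> (int \<times> int) list set" where
  "qwalks m n1 n2 = {w. length w = m \<and> set w \<subseteq> steps \<and>
      (\<forall>j\<le>m. 0 \<le> sum_list (map fst (take j w)) \<and> 0 \<le> sum_list (map snd (take j w))) \<and>
      sum_list (map fst w) = n1 \<and> sum_list (map snd w) = n2}"

definition F :: "int \<Rightarrow> int \<Rightarrow> int \<Rightarrow> int" where
  "F m n1 n2 = (if m < 0 \<or> n1 < 0 \<or> n2 < 0 then 0 else int (card (qwalks (nat m) n1 n2)))"

definition Ft_x :: "int \<Rightarrow> int \<Rightarrow> int" where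
  "Ft_x m n1 = F (m - 1) n1 0"

definition Ft_y :: "int \<Rightarrow> int \<Rightarrow> int" where
  "Ft_y m n2 = F (m - 1) 0 n2 + F (m - 1) 0 (n2 - 1)"

definition f :: "nat \<Rightarrow> nat \<Rightarrow> int" where
  "f i j = (if i \<le> j then Ft_y (int i) (int j - int i) else Ft_x (int j) (int i - int j))"

text \<open>Generalized binomial with integer upper and lower argument (0 for negative lower);
  a(a-1)...(a-k+1)/k!, the division being exact.\<close>
definition binom :: "int \<Rightarrow> int \<Rightarrow> int" where
  "binom a k = (if k < 0 then 0 else (\<Prod>i<nat k. a - int i) div fact (nat k))"

definition c :: "nat \<Rightarrow> nat \<Rightarrow> nat \<Rightarrow> nat \<Rightarrow> int" where
  "c u v i j = (if even (int u - int i)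
      then binom (- int (min i j)) ((int u - int i) div 2)
         * binom (- int (min i j)) (int v - int j - (int u - int i) div 2)
      else 0)"

definition matA :: "(nat \<times> nat \<Rightarrow> nat) \<Rightarrow> nat \<Rightarrow> nat \<Rightarrow> int" where
  "matA \<rho> n k = (case inv \<rho> n of (u, v) \<Rightarrow> case inv \<rho> k of (i, j) \<Rightarrow> c u v i j)"

definition vecx :: "(nat \<times> nat \<Rightarrow> nat) \<Rightarrow> nat \<Rightarrow> int" where
  "vecx \<rho> k = (case inv \<rho> k of (i, j) \<Rightarrow> f i j)"

definition vecb :: "(nat \<times> nat \<Rightarrow> nat) \<Rightarrow> nat \<Rightarrow> int" where
  "vecb \<rho> n = (if inv \<rho> n = (1, 1) then 1 else 0)"

end

theory Submission imports Defs Complex_Main "HOL-Computational_Algebra.Formal_Power_Series" begin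


lemma binom_rat: "k \<ge> 0 \<Longrightarrow> (of_int (binom a k) :: rat) = (of_int a) gchoose (nat k)"
proof -
  assume "k \<ge> 0"
  have "of_int ((\<Prod>i = 0..<nat k. a - of_nat i) div fact (nat k)) = (of_int a :: rat) gchoose (nat k)"
    using of_int_gbinomial[of a "nat k", where 'a=rat] unfolding gbinomial_prod_rev by simp
  thus ?thesis using \<open>k \<ge> 0\<close> by (simp add: binom_def lessThan_atLeast0)
qed

lemma binom_neg[simp]: "k < 0 \<Longrightarrow> binom a k = 0"
  by (simp add: binom_def)

lemma binom_0[simp]: "binom a 0 = 1"
  by (simp add: binom_def)

lemma binom_pascal: "binom r k = binom (r - 1) k + binom (r - 1) (k - 1)"
proof (cases "k \<le> 0")
  case True
  then show ?thesis by (cases "k = 0") auto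
next
  case False
  define k' where "k' = nat (k - 1)"
  have k: "nat k = Suc k'" "nat (k - 1) = k'" using False by (auto simp: k'_def)
  have "(of_int r :: rat) gchoose (Suc k') = (of_int (r - 1) + 1) gchoose (Suc k')" by simp
  also have "\<dots> = (of_int (r-1) gchoose k') + (of_int (r-1) gchoose (Suc k'))"
    by (rule gbinomial_Suc_Suc)
  finally have "(of_int (binom r k) :: rat) = of_int (binom (r - 1) k + binom (r - 1) (k - 1))"
    using False k by (simp add: binom_rat)
  thus ?thesis using of_int_eq_iff by blast
qed

lemma binom_zero_up: "binom 0 k = (if k = 0 then 1 else 0)"
proof (cases "k \<le> 0")
  case True then show ?thesis by (cases "k=0") auto
next
  case False
  define k' where "k' = nat (k - 1)"
  have k: "nat k = Suc k'" using False by (auto simp: k'_def)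
  have "(of_int (binom 0 k) :: rat) = 0" using False k by (simp add: binom_rat)
  then show ?thesis using False by simp
qed



lemma qwalks_neg: "a < 0 \<or> b < 0 \<Longrightarrow> qwalks n a b = {}"
  unfolding qwalks_def by (auto dest!: spec[where x=n])

lemma qwalks_fin: "finite (qwalks n a b)"
proof -
  have "qwalks n a b \<subseteq> {w. set w \<subseteq> steps \<and> length w = n}" unfolding qwalks_def by auto
  moreover have "finite steps" by (simp add: steps_def)
  ultimately show ?thesis using finite_lists_length_eq finite_subset by blast
qed

lemma F_nat: "F (int n) a b = int (card (qwalks n a b))"
  by (auto simp: F_def qwalks_neg)

lemma F_neg: "m < 0 \<or> a < 0 \<or> b < 0 \<Longrightarrow> F m a b = 0"
  by (auto simp: F_def)

lemma qwalks_0: "qwalks 0 a b = (if a = 0 \<and> b = 0 then {[]} else {})"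
  by (auto simp: qwalks_def)

lemma qwalks_Suc:
  assumes "a \<ge> 0" "b \<ge> 0"
  shows "qwalks (Suc n) a b = (\<lambda>(s,w). w @ [s]) ` (SIGMA s:steps. qwalks n (a - fst s) (b - snd s))"
proof
  show "qwalks (Suc n) a b \<subseteq> (\<lambda>(s,w). w @ [s]) ` (SIGMA s:steps. qwalks n (a - fst s) (b - snd s))"
  proof
    fix w assume w: "w \<in> qwalks (Suc n) a b"
    hence len: "length w = Suc n" by (simp add: qwalks_def)
    hence ne: "w \<noteq> []" by auto
    have wd: "w = butlast w @ [last w]" using ne by simp
    have "last w \<in> steps" using w ne by (auto simp: qwalks_def)
    moreover have "butlast w \<in> qwalks n (a - fst (last w)) (b - snd (last w))"
    proof -
      have tk: "\<And>j. j \<le> n \<Longrightarrow> take j (butlast w) = take j w"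
        using len by (simp add: take_butlast)
      have s1: "sum_list (map fst w) = sum_list (map fst (butlast w)) + fst (last w)"
        by (subst wd) simp
      have s2: "sum_list (map snd w) = sum_list (map snd (butlast w)) + snd (last w)"
        by (subst wd) simp
      show ?thesis using w len tk s1 s2 unfolding qwalks_def
        by (auto dest: in_set_butlastD)
    qed
    ultimately show "w \<in> (\<lambda>(s,w). w @ [s]) ` (SIGMA s:steps. qwalks n (a - fst s) (b - snd s))"
      using wd by (auto intro!: image_eqI[where x="(last w, butlast w)"])
  qed
next
  show "(\<lambda>(s,w). w @ [s]) ` (SIGMA s:steps. qwalks n (a - fst s) (b - snd s)) \<subseteq> qwalks (Suc n) a b"
  proof clarify
    fix s1 s2 w assume s: "(s1, s2) \<in> steps" and w: "w \<in> qwalks n (a - fst (s1, s2)) (b - snd (s1, s2))"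
    have len: "length w = n" using w by (simp add: qwalks_def)
    have "\<forall>j\<le>Suc n. 0 \<le> sum_list (map fst (take j (w @ [(s1, s2)]))) \<and> 0 \<le> sum_list (map snd (take j (w @ [(s1, s2)])))"
    proof (intro allI impI)
      fix j assume j: "j \<le> Suc n"
      show "0 \<le> sum_list (map fst (take j (w @ [(s1, s2)]))) \<and> 0 \<le> sum_list (map snd (take j (w @ [(s1, s2)])))"
      proof (cases "j = Suc n")
        case True
        then show ?thesis using len w assms by (simp add: qwalks_def)
      next
        case False
        then have "take j (w @ [(s1, s2)]) = take j w" using j len by simp
        then show ?thesis using w j False by (simp add: qwalks_def)
      qed
    qed
    then show "w @ [(s1, s2)] \<in> qwalks (Suc n) a b"
      using s w len by (simp add: qwalks_def)
  qed
qed

lemma card_qwalks_Suc: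
  assumes "a \<ge> 0" "b \<ge> 0"
  shows "card (qwalks (Suc n) a b) = (\<Sum>s\<in>steps. card (qwalks n (a - fst s) (b - snd s)))"
proof -
  have inj: "inj_on (\<lambda>(s,w). w @ [s]) (SIGMA s:steps. qwalks n (a - fst s) (b - snd s))"
    by (auto simp: inj_on_def)
  have "finite steps" by (simp add: steps_def)
  then show ?thesis
    by (simp add: qwalks_Suc[OF assms] card_image[OF inj] qwalks_fin)
qed

lemma F_Suc:
  assumes "a \<ge> 0" "b \<ge> 0"
  shows "F (int n + 1) a b = F (int n) (a - 1) b + F (int n) (a + 1) b + F (int n) (a - 1) (b - 1) + F (int n) (a + 1) (b + 1)"
proof -
  have "F (int n + 1) a b = F (int (Suc n)) a b" by (simp add: add.commute)
  also have "\<dots> = int (\<Sum>s\<in>steps. card (qwalks n (a - fst s) (b - snd s)))"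
    by (simp only: F_nat card_qwalks_Suc[OF assms])
  also have "\<dots> = F (int n) (a - 1) b + F (int n) (a + 1) b + F (int n) (a - 1) (b - 1) + F (int n) (a + 1) (b + 1)"
    by (simp add: steps_def F_nat)
  finally show ?thesis .
qed

lemma F_0: "F 0 a b = (if a = 0 \<and> b = 0 then 1 else 0)"
  using F_nat[of 0 a b] by (simp add: qwalks_0)



type_synonym ser = "int fps fps"

definition cf :: "ser \<Rightarrow> int \<Rightarrow> int \<Rightarrow> int" where
  "cf A u v = (if u < 0 \<or> v < 0 then 0 else fps_nth (fps_nth A (nat v)) (nat u))"

definition mk :: "(int \<Rightarrow> int \<Rightarrow> int) \<Rightarrow> ser" where
  "mk g = Abs_fps (\<lambda>v. Abs_fps (\<lambda>u. g (int u) (int v)))"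

lemma cf_mk: "u \<ge> 0 \<Longrightarrow> v \<ge> 0 \<Longrightarrow> cf (mk g) u v = g u v"
  by (simp add: cf_def mk_def)

lemma cf_ext: "(\<And>u v. u \<ge> 0 \<Longrightarrow> v \<ge> 0 \<Longrightarrow> cf A u v = cf B u v) \<Longrightarrow> A = B"
proof -
  assume h: "\<And>u v. u \<ge> 0 \<Longrightarrow> v \<ge> 0 \<Longrightarrow> cf A u v = cf B u v"
  show "A = B"
  proof (rule fps_ext)
    fix v show "fps_nth A v = fps_nth B v"
    proof (rule fps_ext)
      fix u show "fps_nth (fps_nth A v) u = fps_nth (fps_nth B v) u" using h[of "int u" "int v"] by (simp add: cf_def)
    qed
  qed
qed

lemma cf_add: "cf (A + B) u v = cf A u v + cf B u v"
  by (simp add: cf_def)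
lemma cf_diff: "cf (A - B) u v = cf A u v - cf B u v"
  by (simp add: cf_def)
lemma cf_one: "cf 1 u v = (if u = 0 \<and> v = 0 then 1 else 0)"
  by (auto simp: cf_def)

lemma cf_Y: "cf (fps_X * A) u v = cf A u (v - 1)"
  by (auto simp: cf_def nat_diff_distrib)

lemma cf_X: "cf (fps_const fps_X * A) u v = cf A (u - 1) v"
  by (auto simp: cf_def nat_diff_distrib)

definition XY :: ser where "XY = fps_const fps_X * fps_X"
definition P :: ser where "P = (1 + fps_const fps_X * (fps_const fps_X * fps_X)) * (1 + fps_X)"

lemma cf_XY: "cf (XY * A) u v = cf A (u - 1) (v - 1)"
  by (simp add: XY_def mult.assoc cf_X cf_Y)

lemma cf_XY_pow: "cf (XY ^ m * A) u v = cf A (u - int m) (v - int m)"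
proof (induction m arbitrary: u v)
  case 0 then show ?case by simp
next
  case (Suc m)
  have "XY ^ Suc m * A = XY * (XY ^ m * A)" by (simp add: mult.assoc)
  then have "cf (XY ^ Suc m * A) u v = cf A (u - 1 - int m) (v - 1 - int m)"
    by (simp only: cf_XY Suc.IH)
  then show ?case by (simp add: algebra_simps)
qed

lemma P_mult: "P * A = A + fps_X * A + fps_const fps_X * (fps_const fps_X * (fps_X * A))
   + fps_const fps_X * (fps_const fps_X * (fps_X * (fps_X * A)))"
  by (simp add: P_def algebra_simps)

lemma cf_P: "cf (P * A) u v = cf A u v + cf A u (v - 1) + cf A (u - 2) (v - 1) + cf A (u - 2) (v - 2)"
  unfolding P_mult cf_add cf_X cf_Y by (simp add: algebra_simps)

definition zc :: "nat \<Rightarrow> int \<Rightarrow> int \<Rightarrow> int" where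
  "zc s u v = (if even u then binom (- int s) (u div 2) * binom (- int s) (v - u div 2) else 0)"

lemma zc_neg: "u < 0 \<or> v < 0 \<Longrightarrow> zc s u v = 0"
  by (cases "u < 0") (auto simp: zc_def)

definition Zs :: "nat \<Rightarrow> ser" where "Zs s = mk (zc s)"

lemma cf_Zs: "cf (Zs s) u v = zc s u v"
  by (cases "u < 0 \<or> v < 0") (auto simp: Zs_def mk_def zc_neg cf_def[of _ u v])

lemma Zs_0: "Zs 0 = 1"
proof (rule cf_ext)
  fix u v :: int assume "u \<ge> 0" "v \<ge> 0"
  then show "cf (Zs 0) u v = cf 1 u v"
    by (auto simp: cf_Zs cf_one zc_def binom_zero_up)
qed

lemma Zs_P: "Zs (Suc s) * P = Zs s"
proof (rule cf_ext)
  fix u v :: int assume "u \<ge> 0" "v \<ge> 0"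
  define B where "B = binom (- int s - 1)"
  have pas: "\<And>k. B k + B (k - 1) = binom (- int s) k"
    unfolding B_def using binom_pascal[of "- int s"] by simp
  have ss: "- int (Suc s) = - int s - 1" by simp
  show "cf (Zs (Suc s) * P) u v = cf (Zs s) u v"
  proof (cases "even u")
    case True
    define a where "a = u div 2"
    have ua: "u = 2 * a" using True by (simp add: a_def)
    have "cf (Zs (Suc s) * P) u v = (B a + B (a - 1)) * (B (v - a) + B (v - a - 1))"
      by (simp add: mult.commute[of "Zs _"] cf_P cf_Zs zc_def ua B_def ss algebra_simps del: of_nat_Suc)
    also have "\<dots> = binom (- int s) a * binom (- int s) (v - a)"
      using pas[of a] pas[of "v - a"] by simp
    finally show ?thesis by (simp add: cf_Zs zc_def ua)
  next
    case False
    then show ?thesis by (simp add: mult.commute[of "Zs _"] cf_P cf_Zs zc_def)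
  qed
qed

definition Qs :: "nat \<Rightarrow> ser" where "Qs n = mk (F (int n))"

lemma cf_Qs: "cf (Qs n) u v = F (int n) u v"
  by (cases "u < 0 \<or> v < 0") (auto simp: Qs_def mk_def F_neg cf_def[of _ u v])

lemma Qs_0: "Qs 0 = 1"
  by (rule cf_ext) (simp add: cf_Qs cf_one F_0)

definition Rc :: "nat \<Rightarrow> int \<Rightarrow> int \<Rightarrow> int" where
  "Rc m a b = (if a = 0 \<or> b = 0 then f (m + nat a) (m + nat b) else 0)"

definition Rs :: "nat \<Rightarrow> ser" where "Rs m = mk (Rc m)"

lemma Qs_rec: "XY * Qs (Suc n) = P * Qs n - Rs (Suc n)"
proof (rule cf_ext)
  fix u v :: int assume u: "u \<ge> 0" and v: "v \<ge> 0"
  show "cf (XY * Qs (Suc n)) u v = cf (P * Qs n - Rs (Suc n)) u v"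
  proof (cases "u = 0")
    case True
    then show ?thesis using v
      by (simp add: cf_XY cf_P cf_diff cf_Qs F_neg Rs_def cf_mk Rc_def f_def Ft_y_def)
  next
    case u0: False
    show ?thesis
    proof (cases "v = 0")
      case True
      have "\<not> Suc (n + nat u) \<le> Suc n" using u u0 by simp
      then show ?thesis using True u u0
        by (simp add: cf_XY cf_P cf_diff cf_Qs F_neg Rs_def cf_mk Rc_def f_def Ft_x_def)
    next
      case False
      have "F (int n + 1) (u - 1) (v - 1) = F (int n) (u - 2) (v - 1) + F (int n) u (v - 1) + F (int n) (u - 2) (v - 2) + F (int n) u v"
        using F_Suc[of "u - 1" "v - 1" n] u v u0 False by simp
      then show ?thesis using False u u0 v
        by (simp add: cf_XY cf_P cf_diff cf_Qs Rs_def cf_mk Rc_def add.commute)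
    qed
  qed
qed

lemma telescope:
  "(\<Sum>n<N. XY ^ Suc n * Rs (Suc n) * Zs (Suc n)) = XY - XY ^ Suc N * Zs N * Qs N"
proof (induction N)
  case 0
  then show ?case by (simp add: Zs_0 Qs_0)
next
  case (Suc N)
  have "XY ^ Suc N * Rs (Suc N) * Zs (Suc N) = XY ^ Suc N * (Zs (Suc N) * (P * Qs N - XY * Qs (Suc N)))"
    by (simp add: Qs_rec algebra_simps)
  also have "\<dots> = XY ^ Suc N * ((Zs (Suc N) * P) * Qs N) - XY ^ Suc (Suc N) * Zs (Suc N) * Qs (Suc N)"
    by (simp add: algebra_simps)
  also have "\<dots> = XY ^ Suc N * Zs N * Qs N - XY ^ Suc (Suc N) * Zs (Suc N) * Qs (Suc N)"
    by (simp add: Zs_P mult.assoc)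
  finally show ?case using Suc by simp
qed



lemma cf_zero: "cf 0 u v = 0" by (simp add: cf_def)

lemma cf_sum: "cf (sum g S) u v = (\<Sum>n\<in>S. cf (g n) u v)"
proof (cases "finite S")
  case True then show ?thesis
    by (induction S rule: finite_induct) (simp_all add: cf_zero cf_add)
next
  case False then show ?thesis by (simp add: cf_zero)
qed

lemma cf_mult: "cf (A * B) (int u) (int v) =
   (\<Sum>k\<le>v. \<Sum>l\<le>u. cf A (int l) (int k) * cf B (int u - int l) (int v - int k))"
proof -
  have "cf (A * B) (int u) (int v) = fps_nth (fps_nth (A * B) v) u" by (simp add: cf_def)
  also have "\<dots> = (\<Sum>k\<le>v. fps_nth (fps_nth A k * fps_nth B (v - k)) u)"
    by (simp add: fps_mult_nth fps_sum_nth atLeast0AtMost)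
  also have "\<dots> = (\<Sum>k\<le>v. \<Sum>l\<le>u. cf A (int l) (int k) * cf B (int u - int l) (int v - int k))"
    by (rule sum.cong) (auto simp: fps_mult_nth atLeast0AtMost cf_def nat_diff_distrib intro!: sum.cong)
  finally show ?thesis .
qed

lemma c_zc: "c u v i j = zc (min i j) (int u - int i) (int v - int j)"
  by (simp add: c_def zc_def)

lemma f_min0: "min i j = 0 \<Longrightarrow> f i j = 0"
  by (auto simp: f_def Ft_x_def Ft_y_def F_neg min_def)

lemma term_eq:
  assumes "l \<le> u" "k \<le> v"
  shows "cf (XY ^ Suc n * Rs (Suc n)) (int l) (int k) * cf (Zs (Suc n)) (int u - int l) (int v - int k)
       = (if min l k = Suc n then c u v l k * f l k else 0)"
proof -
  have "cf (XY ^ Suc n * Rs (Suc n)) (int l) (int k) = cf (Rs (Suc n)) (int l - int (Suc n)) (int k - int (Suc n))"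
    by (rule cf_XY_pow)
  also have "\<dots> = (if Suc n \<le> l \<and> Suc n \<le> k then Rc (Suc n) (int l - int (Suc n)) (int k - int (Suc n)) else 0)"
    by (auto simp: Rs_def mk_def cf_def)
  also have "\<dots> = (if Suc n \<le> l \<and> Suc n \<le> k then Rc (Suc n) (int (l - Suc n)) (int (k - Suc n)) else 0)"
    by (auto simp: of_nat_diff simp del: of_nat_Suc)
  finally have e: "cf (XY ^ Suc n * Rs (Suc n)) (int l) (int k) = \<dots>" .
  show ?thesis
  proof (cases "min l k = Suc n")
    case True
    then have h: "Suc n \<le> l" "Suc n \<le> k" "l = Suc n \<or> k = Suc n" by auto
    have r: "Rc (Suc n) (int (l - Suc n)) (int (k - Suc n)) = f l k"
      unfolding Rc_def using h by (auto simp del: of_nat_diff)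
    have z: "c u v l k = zc (Suc n) (int u - int l) (int v - int k)" using True by (simp add: c_zc)
    show ?thesis unfolding e using h r z True by (simp add: cf_Zs mult.commute del: of_nat_diff)
  next
    case False
    then have "\<not> (Suc n \<le> l \<and> Suc n \<le> k \<and> (l - Suc n = 0 \<or> k - Suc n = 0))" by auto
    then show ?thesis using False unfolding e Rc_def by (auto simp del: of_nat_diff)
  qed
qed

lemma cf_T: "cf (XY ^ Suc n * Rs (Suc n) * Zs (Suc n)) (int u) (int v) =
   (\<Sum>k\<le>v. \<Sum>l\<le>u. if min l k = Suc n then c u v l k * f l k else 0)"
  by (subst cf_mult) (intro sum.cong refl term_eq, auto)

lemma main_sum: "(\<Sum>i\<le>u. \<Sum>j\<le>v. c u v i j * f i j) = (if u = 1 \<and> v = 1 then 1 else 0)"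
proof -
  have tel: "cf (\<Sum>n<u. XY ^ Suc n * Rs (Suc n) * Zs (Suc n)) (int u) (int v) = cf XY (int u) (int v)"
  proof -
    have "cf (XY ^ Suc u * Zs u * Qs u) (int u) (int v) = 0"
      by (subst mult.assoc, subst cf_XY_pow) (simp add: cf_def)
    then show ?thesis unfolding telescope cf_diff by simp
  qed
  have xy: "cf XY (int u) (int v) = (if u = 1 \<and> v = 1 then 1 else 0)"
    using cf_XY[of 1 "int u" "int v"] by (auto simp: cf_one)
  have "cf (\<Sum>n<u. XY ^ Suc n * Rs (Suc n) * Zs (Suc n)) (int u) (int v)
      = (\<Sum>n<u. \<Sum>k\<le>v. \<Sum>l\<le>u. if min l k = Suc n then c u v l k * f l k else 0)"
    unfolding cf_sum cf_T by simp
  also have "\<dots> = (\<Sum>k\<le>v. \<Sum>l\<le>u. \<Sum>n<u. if min l k = Suc n then c u v l k * f l k else 0)"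
    by (simp add: sum.swap[of _ "{..<u}"] sum.swap[of _ "{..v}" "{..u}"])
  also have "\<dots> = (\<Sum>k\<le>v. \<Sum>l\<le>u. c u v l k * f l k)"
  proof (intro sum.cong refl)
    fix k l assume "k \<in> {..v}" "l \<in> {..u}"
    show "(\<Sum>n<u. if min l k = Suc n then c u v l k * f l k else 0) = c u v l k * f l k"
    proof (cases "min l k = 0")
      case True then show ?thesis by (simp add: f_min0)
    next
      case False
      then have "\<And>n. (min l k = Suc n) = (n = min l k - 1)" by auto
      moreover have "min l k - 1 < u" using \<open>l \<in> {..u}\<close> False by auto
      ultimately show ?thesis by simp
    qed
  qed
  also have "\<dots> = (\<Sum>i\<le>u. \<Sum>j\<le>v. c u v i j * f i j)"
    by (rule sum.swap)
  finally show ?thesis using tel xy by simp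
qed



lemma c_nz: "c u v i j \<noteq> 0 \<Longrightarrow> i \<le> u \<and> j \<le> v"
proof -
  assume h: "c u v i j \<noteq> 0"
  then have e: "even (int u - int i)"
    and b1: "binom (- int (min i j)) ((int u - int i) div 2) \<noteq> 0"
    and b2: "binom (- int (min i j)) (int v - int j - (int u - int i) div 2) \<noteq> 0"
    by (auto simp: c_def split: if_splits)
  from b1 have "(int u - int i) div 2 \<ge> 0" by (metis binom_neg not_le)
  moreover from b2 have "int v - int j - (int u - int i) div 2 \<ge> 0" by (metis binom_neg not_le)
  ultimately show ?thesis by auto
qed

lemma c_diag: "c u v u v = 1"
  by (simp add: c_def)

theorem corollary5:
  fixes \<rho> :: "nat \<times> nat \<Rightarrow> nat"
  assumes "bij \<rho>"
    and "\<And>a b c d. a \<le> c \<Longrightarrow> b \<le> d \<Longrightarrow> \<rho> (a, b) \<le> \<rho> (c, d)"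
  shows "(\<forall>n k. n < k \<longrightarrow> matA \<rho> n k = 0) \<and> (\<forall>n. matA \<rho> n n = 1)
    \<and> (\<forall>n. finite {k. matA \<rho> n k * vecx \<rho> k \<noteq> 0}
         \<and> (\<Sum>k\<in>{k. matA \<rho> n k * vecx \<rho> k \<noteq> 0}. matA \<rho> n k * vecx \<rho> k) = vecb \<rho> n)"
proof -
  have inv1: "\<And>p. inv \<rho> (\<rho> p) = p" using assms(1) by (simp add: bij_is_inj)
  have inv2: "\<And>n. \<rho> (inv \<rho> n) = n" using assms(1) by (meson bij_inv_eq_iff)
  have tri: "\<And>n k. matA \<rho> n k \<noteq> 0 \<Longrightarrow> k \<le> n"
  proof -
    fix n k assume h: "matA \<rho> n k \<noteq> 0"
    obtain u v where uv: "inv \<rho> n = (u, v)" by force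
    obtain i j where ij: "inv \<rho> k = (i, j)" by force
    have "c u v i j \<noteq> 0" using h by (simp add: matA_def uv ij)
    then have "i \<le> u" "j \<le> v" using c_nz by auto
    then have "\<rho> (i, j) \<le> \<rho> (u, v)" by (rule assms(2))
    then show "k \<le> n" using inv2[of k] inv2[of n] uv ij by simp
  qed
  have p1: "\<forall>n k. n < k \<longrightarrow> matA \<rho> n k = 0" using tri by (meson not_le)
  have p2: "\<forall>n. matA \<rho> n n = 1" by (auto simp: matA_def c_diag split: prod.splits)
  have p3: "finite {k. matA \<rho> n k * vecx \<rho> k \<noteq> 0}
         \<and> (\<Sum>k\<in>{k. matA \<rho> n k * vecx \<rho> k \<noteq> 0}. matA \<rho> n k * vecx \<rho> k) = vecb \<rho> n" for n
  proof -
    obtain u v where uv: "inv \<rho> n = (u, v)" by force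
    define R where "R = {..u} \<times> {..v}"
    define S where "S = {k. matA \<rho> n k * vecx \<rho> k \<noteq> 0}"
    have sub: "S \<subseteq> \<rho> ` R"
    proof
      fix k assume "k \<in> S"
      then have h: "matA \<rho> n k \<noteq> 0" by (auto simp: S_def)
      obtain i j where ij: "inv \<rho> k = (i, j)" by force
      have "c u v i j \<noteq> 0" using h by (simp add: matA_def uv ij)
      then have "i \<le> u" "j \<le> v" using c_nz by auto
      then show "k \<in> \<rho> ` R" using inv2[of k] ij unfolding R_def by force
    qed
    have finR: "finite R" by (simp add: R_def)
    then have fin: "finite S" using sub finite_subset by blast
    have "(\<Sum>k\<in>S. matA \<rho> n k * vecx \<rho> k) = (\<Sum>k\<in>\<rho> ` R. matA \<rho> n k * vecx \<rho> k)"
      by (rule sum.mono_neutral_left) (use finR sub in \<open>auto simp: S_def\<close>)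
    also have "\<dots> = (\<Sum>p\<in>R. matA \<rho> n (\<rho> p) * vecx \<rho> (\<rho> p))"
      by (rule sum.reindex[unfolded comp_def]) (use assms(1) in \<open>auto simp: bij_def intro: inj_on_subset\<close>)
    also have "\<dots> = (\<Sum>p\<in>R. c u v (fst p) (snd p) * f (fst p) (snd p))"
      by (rule sum.cong) (auto simp: matA_def vecx_def inv1 uv)
    also have "\<dots> = (\<Sum>i\<le>u. \<Sum>j\<le>v. c u v i j * f i j)"
      unfolding R_def sum.cartesian_product by (simp add: case_prod_beta)
    also have "\<dots> = vecb \<rho> n" by (simp add: main_sum vecb_def uv)
    finally show ?thesis using fin by (simp add: S_def)
  qed
  show ?thesis using p1 p2 p3 by blast
qed

end
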